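(* Let $R=k[x_1,\dots,x_m]$ be a polynomial ring over a field $k$, $\lambda:\mathbb Z^m\to\mathbb Z$ a linear map, and $I$ a homogeneous ideal of $R$. With the notation $\widetilde L$ defined in the context, for all $n\ge0$, $$\widetilde{I^n}=\widetilde I^{\,n}:\langle t\rangle=\bigcup_{r\ge0}(\widetilde I^{\,n}:t^r).$$
   Context: For a monomial $u=x^b$ set $\lambda(u)=\lambda(b)$. For $0\ne g=\sum a_iu_i\in R$ ($a_i\in k\setminus\{0\}$, $u_i$ distinct monomials) with $b(g)=\max\lambda(u_i)$, put $g^*=t^{b(g)}g(t^{-\lambda(x_1)}x_1,\dots,t^{-\lambda(x_m)}x_m)\in R[t]$, where $t$ is a new variable. For an ideal $L\subseteq R$ let $L^*\subseteq R[t]$ be the ideal generated by $\{g^*: g\in L\}$, let $S=k[t]_{(t)}[x_1,\dots,x_m]$, and set $\widetilde L=L^*S$. *)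

theory Defs
  imports "HOL-Library.Poly_Mapping" "HOL-Computational_Algebra.Fraction_Field"
begin

text \<open>Polynomials over a field k in the variables indexed by nat.
  Convention: x_1,...,x_m are the variables with indices 0,...,m-1 and the
  new variable t is the variable with index m.\<close>

type_synonym 'k mpoly = "(nat \<Rightarrow>\<^sub>0 nat) \<Rightarrow>\<^sub>0 'k"

definition polys_in :: "nat set \<Rightarrow> 'k::field mpoly set" where
  "polys_in V = {p. \<forall>b \<in> Poly_Mapping.keys p. Poly_Mapping.keys b \<subseteq> V}"

definition Rring :: "nat \<Rightarrow> 'k::field mpoly set" where
  "Rring m = polys_in {..<m}"

definition Rtring :: "nat \<Rightarrow> 'k::field mpoly set" where
  "Rtring m = polys_in {..m}"

definition tvar :: "nat \<Rightarrow> 'k::field mpoly" where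
  "tvar m = Poly_Mapping.single (Poly_Mapping.single m 1) 1"

definition ideal_in :: "'a::comm_ring_1 set \<Rightarrow> 'a set \<Rightarrow> bool" where
  "ideal_in A J \<longleftrightarrow> J \<subseteq> A \<and> 0 \<in> J \<and> (\<forall>x\<in>J. \<forall>y\<in>J. x + y \<in> J)
     \<and> (\<forall>a\<in>A. \<forall>x\<in>J. a * x \<in> J)"

definition ideal_gen :: "'a::comm_ring_1 set \<Rightarrow> 'a set \<Rightarrow> 'a set" where
  "ideal_gen A X = \<Inter>{J. ideal_in A J \<and> X \<subseteq> J}"

definition ideal_pow :: "'a::comm_ring_1 set \<Rightarrow> 'a set \<Rightarrow> nat \<Rightarrow> 'a set" where
  "ideal_pow A J n = ideal_gen A {prod_list xs | xs. length xs = n \<and> set xs \<subseteq> J}"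

definition colon :: "'a::comm_ring_1 set \<Rightarrow> 'a set \<Rightarrow> 'a \<Rightarrow> 'a set" where
  "colon A J s = {a \<in> A. s * a \<in> J}"

definition saturation :: "'a::comm_ring_1 set \<Rightarrow> 'a set \<Rightarrow> 'a \<Rightarrow> 'a set" where
  "saturation A J s = (\<Union>r. colon A J (s ^ r))"

definition mdeg :: "(nat \<Rightarrow>\<^sub>0 nat) \<Rightarrow> nat" where
  "mdeg b = (\<Sum>i\<in>Poly_Mapping.keys b. Poly_Mapping.lookup b i)"

definition hcomp :: "nat \<Rightarrow> 'k::field mpoly \<Rightarrow> 'k mpoly" where
  "hcomp d f = (\<Sum>b\<in>{b \<in> Poly_Mapping.keys f. mdeg b = d}. Poly_Mapping.single b (Poly_Mapping.lookup f b))"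

definition homogeneous_ideal :: "nat \<Rightarrow> 'k::field mpoly set \<Rightarrow> bool" where
  "homogeneous_ideal m I \<longleftrightarrow> ideal_in (Rring m) I \<and> (\<forall>f\<in>I. \<forall>d. hcomp d f \<in> I)"

text \<open>The weight lambda(b) = sum_i c_i b_i of a linear map Z^m -> Z.\<close>
definition wt :: "nat \<Rightarrow> (nat \<Rightarrow> int) \<Rightarrow> (nat \<Rightarrow>\<^sub>0 nat) \<Rightarrow> int" where
  "wt m c b = (\<Sum>i<m. c i * int (Poly_Mapping.lookup b i))"

definition bmax :: "nat \<Rightarrow> (nat \<Rightarrow> int) \<Rightarrow> 'k::field mpoly \<Rightarrow> int" where
  "bmax m c g = Max (wt m c ` Poly_Mapping.keys g)"

text \<open>g^* = t^{b(g)} g(t^{-lambda(x_1)} x_1, ..., t^{-lambda(x_m)} x_m)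
  = sum_i a_i t^{b(g) - lambda(u_i)} u_i.\<close>
definition gstar :: "nat \<Rightarrow> (nat \<Rightarrow> int) \<Rightarrow> 'k::field mpoly \<Rightarrow> 'k mpoly" where
  "gstar m c g = (\<Sum>b\<in>Poly_Mapping.keys g.
      Poly_Mapping.single (b + Poly_Mapping.single m (nat (bmax m c g - wt m c b))) (Poly_Mapping.lookup g b))"

definition Lstar :: "nat \<Rightarrow> (nat \<Rightarrow> int) \<Rightarrow> 'k::field mpoly set \<Rightarrow> 'k mpoly set" where
  "Lstar m c L = ideal_gen (Rtring m) (gstar m c ` (L - {0}))"

text \<open>S = k[t]_(t)[x_1,...,x_m], realised inside the fraction field of the
  polynomial ring: fractions f/u with f in R[t], u in k[t], u(0) \<noteq> 0.\<close>
definition Uset :: "nat \<Rightarrow> 'k::field mpoly set" where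
  "Uset m = {u \<in> polys_in {m}. Poly_Mapping.lookup u 0 \<noteq> 0}"

definition Sring :: "nat \<Rightarrow> 'k::field mpoly fract set" where
  "Sring m = {Fract f u | f u. f \<in> Rtring m \<and> u \<in> Uset m}"

definition emb :: "'k::field mpoly \<Rightarrow> 'k mpoly fract" where
  "emb f = Fract f 1"

definition Ltilde :: "nat \<Rightarrow> (nat \<Rightarrow> int) \<Rightarrow> 'k::field mpoly set \<Rightarrow> 'k mpoly fract set" where
  "Ltilde m c L = ideal_gen (Sring m) (emb ` Lstar m c L)"

end

theory Submission
  imports Defs
begin
definition mapk :: "((nat \<Rightarrow>\<^sub>0 nat) \<Rightarrow> (nat \<Rightarrow>\<^sub>0 nat)) \<Rightarrow> 'k::field mpoly \<Rightarrow> 'k mpoly" where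
  "mapk \<kappa> F = (\<Sum>b\<in>Poly_Mapping.keys F. Poly_Mapping.single (\<kappa> b) (Poly_Mapping.lookup F b))"

lemma expand: "F = (\<Sum>b\<in>Poly_Mapping.keys F. Poly_Mapping.single b (Poly_Mapping.lookup F b))"
proof (rule poly_mapping_eqI)
  fix x
  have "Poly_Mapping.lookup (\<Sum>b\<in>Poly_Mapping.keys F. Poly_Mapping.single b (Poly_Mapping.lookup F b)) x
     = (\<Sum>b\<in>Poly_Mapping.keys F. (if b = x then Poly_Mapping.lookup F b else 0))"
    by (simp add: lookup_sum lookup_single when_def)
  also have "\<dots> = Poly_Mapping.lookup F x"
    by (simp add: in_keys_iff)
  finally show "Poly_Mapping.lookup F x = Poly_Mapping.lookup (\<Sum>b\<in>Poly_Mapping.keys F. Poly_Mapping.single b (Poly_Mapping.lookup F b)) x" by simp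
qed

lemma mapk_superset:
  assumes "finite A" "Poly_Mapping.keys F \<subseteq> A"
  shows "mapk \<kappa> F = (\<Sum>b\<in>A. Poly_Mapping.single (\<kappa> b) (Poly_Mapping.lookup F b))"
  unfolding mapk_def
  by (rule sum.mono_neutral_left) (use assms in \<open>auto simp: in_keys_iff\<close>)

lemma mapk_add: "mapk \<kappa> (F + G) = mapk \<kappa> F + mapk \<kappa> G"
proof -
  let ?A = "Poly_Mapping.keys F \<union> Poly_Mapping.keys G"
  have fin: "finite ?A" by simp
  have "Poly_Mapping.keys (F+G) \<subseteq> ?A" by (rule keys_add)
  then show ?thesis
    using mapk_superset[OF fin, of F] mapk_superset[OF fin, of G] mapk_superset[OF fin, of "F+G"]
    by (simp add: lookup_add single_add sum.distrib)
qed

lemma mapk_zero[simp]: "mapk \<kappa> 0 = 0"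
  by (simp add: mapk_def)

lemma mapk_sum: "mapk \<kappa> (sum f A) = (\<Sum>a\<in>A. mapk \<kappa> (f a))"
  by (induction A rule: infinite_finite_induct) (auto simp: mapk_add)

lemma mapk_single[simp]: "mapk \<kappa> (Poly_Mapping.single b a) = Poly_Mapping.single (\<kappa> b) a"
  by (cases "a = 0") (auto simp: mapk_def)

lemma mult_expand: "F * G = (\<Sum>b\<in>Poly_Mapping.keys F. \<Sum>b'\<in>Poly_Mapping.keys G.
     Poly_Mapping.single (b + b') (Poly_Mapping.lookup F b * Poly_Mapping.lookup G b'))"
proof -
  have "F * G = (\<Sum>b\<in>Poly_Mapping.keys F. Poly_Mapping.single b (Poly_Mapping.lookup F b)) *
                (\<Sum>b\<in>Poly_Mapping.keys G. Poly_Mapping.single b (Poly_Mapping.lookup G b))"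
    using expand[of F] expand[of G] by simp
  also have "\<dots> = (\<Sum>b\<in>Poly_Mapping.keys F. \<Sum>b'\<in>Poly_Mapping.keys G.
     Poly_Mapping.single (b + b') (Poly_Mapping.lookup F b * Poly_Mapping.lookup G b'))"
    by (simp add: sum_product mult_single)
  finally show ?thesis .
qed

lemma mapk_mult:
  assumes "\<And>b b'. b \<in> Poly_Mapping.keys F \<Longrightarrow> b' \<in> Poly_Mapping.keys G \<Longrightarrow> \<kappa>1 b + \<kappa>2 b' = \<kappa>3 (b + b')"
  shows "mapk \<kappa>1 F * mapk \<kappa>2 G = mapk \<kappa>3 (F * G)"
proof -
  have "mapk \<kappa>1 F * mapk \<kappa>2 G = (\<Sum>b\<in>Poly_Mapping.keys F. \<Sum>b'\<in>Poly_Mapping.keys G.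
     Poly_Mapping.single (\<kappa>1 b + \<kappa>2 b') (Poly_Mapping.lookup F b * Poly_Mapping.lookup G b'))"
    by (simp add: mapk_def sum_product mult_single)
  also have "\<dots> = (\<Sum>b\<in>Poly_Mapping.keys F. \<Sum>b'\<in>Poly_Mapping.keys G.
     Poly_Mapping.single (\<kappa>3 (b + b')) (Poly_Mapping.lookup F b * Poly_Mapping.lookup G b'))"
    using assms by (intro sum.cong refl) simp
  also have "\<dots> = mapk \<kappa>3 (F * G)"
    by (subst mult_expand) (simp add: mapk_sum)
  finally show ?thesis .
qed

lemma mapk_cong: "(\<And>b. b \<in> Poly_Mapping.keys F \<Longrightarrow> \<kappa> b = \<kappa>' b) \<Longrightarrow> mapk \<kappa> F = mapk \<kappa>' F"
  by (simp add: mapk_def)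

lemma mapk_id: "mapk (\<lambda>b. b) F = F"
  using expand[of F] by (simp add: mapk_def)

lemma mapk_comp: "mapk \<kappa>' (mapk \<kappa> F) = mapk (\<lambda>b. \<kappa>' (\<kappa> b)) F"
proof -
  have "mapk \<kappa>' (mapk \<kappa> F) = mapk \<kappa>' (\<Sum>b\<in>Poly_Mapping.keys F. Poly_Mapping.single (\<kappa> b) (Poly_Mapping.lookup F b))"
    by (simp only: mapk_def[of \<kappa> F])
  also have "\<dots> = mapk (\<lambda>b. \<kappa>' (\<kappa> b)) F" by (simp only: mapk_sum mapk_single) (simp add: mapk_def)
  finally show ?thesis .
qed

lemma single_mult_mapk: "Poly_Mapping.single a 1 * mapk \<kappa> F = mapk (\<lambda>b. a + \<kappa> b) F"
  by (simp add: mapk_def sum_distrib_left mult_single)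

lemma keys_mapk: "Poly_Mapping.keys (mapk \<kappa> F) \<subseteq> \<kappa> ` Poly_Mapping.keys F"
proof -
  have "Poly_Mapping.keys (mapk \<kappa> F) \<subseteq> (\<Union>b\<in>Poly_Mapping.keys F. Poly_Mapping.keys (Poly_Mapping.single (\<kappa> b) (Poly_Mapping.lookup F b)))"
    unfolding mapk_def by (rule keys_sum)
  then show ?thesis by (auto split: if_splits)
qed

definition subr :: "'a::comm_ring_1 set \<Rightarrow> bool" where
  "subr A \<longleftrightarrow> 0 \<in> A \<and> 1 \<in> A \<and> (\<forall>x\<in>A. \<forall>y\<in>A. x + y \<in> A \<and> x * y \<in> A)"

lemma ideal_gen_sub: "X \<subseteq> ideal_gen A X"
  unfolding ideal_gen_def by blast

lemma ideal_gen_min: "ideal_in A J \<Longrightarrow> X \<subseteq> J \<Longrightarrow> ideal_gen A X \<subseteq> J"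
  unfolding ideal_gen_def by blast

lemma ideal_self: "subr A \<Longrightarrow> ideal_in A A"
  unfolding subr_def ideal_in_def by blast

lemma ideal_Inter:
  assumes "F \<noteq> {}" "\<And>J. J \<in> F \<Longrightarrow> ideal_in A J"
  shows "ideal_in A (\<Inter>F)"
  using assms unfolding ideal_in_def by blast

lemma ideal_gen_ideal:
  assumes "subr A" "X \<subseteq> A"
  shows "ideal_in A (ideal_gen A X)"
proof -
  have ne: "A \<in> {J. ideal_in A J \<and> X \<subseteq> J}" using assms ideal_self by blast
  show ?thesis unfolding ideal_gen_def
    by (rule ideal_Inter) (use ne in auto)
qed

lemma ideal_gen_subA: "subr A \<Longrightarrow> X \<subseteq> A \<Longrightarrow> ideal_gen A X \<subseteq> A"
  using ideal_gen_ideal unfolding ideal_in_def by blast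

lemma ideal_sum: "ideal_in A J \<Longrightarrow> (\<And>i. i \<in> S \<Longrightarrow> f i \<in> J) \<Longrightarrow> sum f S \<in> J"
  by (induction S rule: infinite_finite_induct) (auto simp: ideal_in_def)

lemma ideal_mult: "ideal_in A J \<Longrightarrow> a \<in> A \<Longrightarrow> x \<in> J \<Longrightarrow> a * x \<in> J"
  unfolding ideal_in_def by blast

lemma ideal_mult_right: "ideal_in A J \<Longrightarrow> a \<in> A \<Longrightarrow> x \<in> J \<Longrightarrow> x * a \<in> J"
  unfolding ideal_in_def by (metis mult.commute)

lemma ideal_add: "ideal_in A J \<Longrightarrow> x \<in> J \<Longrightarrow> y \<in> J \<Longrightarrow> x + y \<in> J"
  unfolding ideal_in_def by blast

lemma ideal_zero: "ideal_in A J \<Longrightarrow> 0 \<in> J"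
  unfolding ideal_in_def by blast

lemma ideal_subA: "ideal_in A J \<Longrightarrow> x \<in> J \<Longrightarrow> x \<in> A"
  unfolding ideal_in_def by blast

lemma subr_prod_list: "subr A \<Longrightarrow> set xs \<subseteq> A \<Longrightarrow> prod_list xs \<in> A"
  by (induction xs) (auto simp: subr_def)

lemma ideal_prod_list: "ideal_in A J \<Longrightarrow> set xs \<subseteq> J \<Longrightarrow> xs \<noteq> [] \<Longrightarrow> prod_list xs \<in> J"
proof (induction xs)
  case Nil
  then show ?case by simp
next
  case (Cons x xs)
  show ?case
  proof (cases "xs = []")
    case True
    then show ?thesis using Cons.prems by simp
  next
    case False
    have xJ: "x \<in> J" using Cons.prems(2) by simp
    have p: "prod_list xs \<in> J" using Cons.IH Cons.prems False by simp
    have x: "x \<in> A" using ideal_subA[OF Cons.prems(1) xJ] .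
    have "x * prod_list xs \<in> J" using ideal_mult[OF Cons.prems(1) x p] .
    then show ?thesis by (simp only: prod_list.Cons)
  qed
qed

lemma ideal_pow_ideal:
  assumes "subr A" "J \<subseteq> A"
  shows "ideal_in A (ideal_pow A J n)"
  unfolding ideal_pow_def
proof (rule ideal_gen_ideal[OF assms(1)])
  show "{prod_list xs |xs. length xs = n \<and> set xs \<subseteq> J} \<subseteq> A"
  proof
    fix y assume "y \<in> {prod_list xs |xs. length xs = n \<and> set xs \<subseteq> J}"
    then obtain xs where "y = prod_list xs" "set xs \<subseteq> J" by auto
    then show "y \<in> A" using subr_prod_list[OF assms(1), of xs] assms(2) by auto
  qed
qed

lemma ideal_pow_gen: "length xs = n \<Longrightarrow> set xs \<subseteq> J \<Longrightarrow> prod_list xs \<in> ideal_pow A J n"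
  unfolding ideal_pow_def by (rule subsetD[OF ideal_gen_sub]) (intro CollectI exI[of _ xs] conjI refl)

lemma ideal_gen_induct:
  assumes "x \<in> ideal_gen A X" "ideal_in A {y \<in> A. P y}" "X \<subseteq> A" "\<And>y. y \<in> X \<Longrightarrow> P y"
  shows "P x"
proof -
  have "X \<subseteq> {y \<in> A. P y}" using assms(3,4) by blast
  then have "ideal_gen A X \<subseteq> {y \<in> A. P y}" by (rule ideal_gen_min[OF assms(2)])
  then show ?thesis using assms(1) by blast
qed

lemma ideal_gen_prod_aux:
  assumes A: "subr A" and XA: "X \<subseteq> A" and K: "ideal_in A K"
    and H: "\<And>w ys. w \<in> A \<Longrightarrow> set ys \<subseteq> X \<Longrightarrow> length ys = n \<Longrightarrow> w * prod_list ys \<in> K"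
  shows "set xs \<subseteq> ideal_gen A X \<Longrightarrow> w \<in> A \<Longrightarrow> set ys \<subseteq> X \<Longrightarrow> length xs + length ys = n
     \<Longrightarrow> w * prod_list xs * prod_list ys \<in> K"
proof (induction xs arbitrary: w ys)
  case Nil
  then show ?case using H by simp
next
  case (Cons x xs)
  have GA: "ideal_gen A X \<subseteq> A" using ideal_gen_subA[OF A XA] .
  have "x \<in> ideal_gen A X" using Cons by simp
  then have "\<forall>w\<in>A. w * x * prod_list xs * prod_list ys \<in> K"
  proof (rule ideal_gen_induct[OF _ _ XA])
    show "ideal_in A {y \<in> A. \<forall>w\<in>A. w * y * prod_list xs * prod_list ys \<in> K}"
      unfolding ideal_in_def
    proof (intro conjI ballI)
      show "0 \<in> {y \<in> A. \<forall>w\<in>A. w * y * prod_list xs * prod_list ys \<in> K}"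
        using A K by (auto simp: subr_def ideal_zero)
      show "x + y \<in> {y \<in> A. \<forall>w\<in>A. w * y * prod_list xs * prod_list ys \<in> K}"
        if "x \<in> {y \<in> A. \<forall>w\<in>A. w * y * prod_list xs * prod_list ys \<in> K}"
           "y \<in> {y \<in> A. \<forall>w\<in>A. w * y * prod_list xs * prod_list ys \<in> K}" for x y
        using that A ideal_add[OF K] by (auto simp: subr_def distrib_left distrib_right)
      show "a * x \<in> {y \<in> A. \<forall>w\<in>A. w * y * prod_list xs * prod_list ys \<in> K}"
        if "a \<in> A" "x \<in> {y \<in> A. \<forall>w\<in>A. w * y * prod_list xs * prod_list ys \<in> K}" for a x
      proof -
        have "a * x \<in> A" using that A by (auto simp: subr_def)
        moreover have "\<forall>w\<in>A. w * (a * x) * prod_list xs * prod_list ys \<in> K"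
        proof
          fix w assume "w \<in> A"
          then have "w * a \<in> A" using that A by (auto simp: subr_def)
          then show "w * (a * x) * prod_list xs * prod_list ys \<in> K"
            using that by (auto simp: mult.assoc)
        qed
        ultimately show ?thesis by blast
      qed
    qed auto
  next
    fix y assume y: "y \<in> X"
    show "\<forall>w\<in>A. w * y * prod_list xs * prod_list ys \<in> K"
    proof
      fix w assume w: "w \<in> A"
      have "w * prod_list xs * prod_list (y # ys) \<in> K"
        by (rule Cons.IH) (use Cons.prems y w in auto)
      then show "w * y * prod_list xs * prod_list ys \<in> K" by (simp add: ac_simps)
    qed
  qed
  then show ?case using Cons by (simp add: ac_simps)
qed

lemma ideal_gen_prod:
  assumes A: "subr A" and XA: "X \<subseteq> A" and K: "ideal_in A K"
    and H: "\<And>w ys. w \<in> A \<Longrightarrow> set ys \<subseteq> X \<Longrightarrow> length ys = n \<Longrightarrow> w * prod_list ys \<in> K"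
    and xs: "set xs \<subseteq> ideal_gen A X" "length xs = n"
  shows "prod_list xs \<in> K"
  using ideal_gen_prod_aux[OF A XA K H xs(1), where w=1 and ys="[]"] A xs by (simp add: subr_def)

definition sat_ideal where
  "sat_ideal A J s \<longleftrightarrow> (\<forall>a\<in>A. s * a \<in> J \<longrightarrow> a \<in> J)"

lemma saturation_ideal:
  assumes A: "subr A" and J: "ideal_in A J" and s: "s \<in> A"
  shows "ideal_in A (saturation A J s)"
  unfolding ideal_in_def saturation_def colon_def
proof (intro conjI ballI)
  show "(\<Union>r. {a \<in> A. s ^ r * a \<in> J}) \<subseteq> A" by blast
  show "0 \<in> (\<Union>r. {a \<in> A. s ^ r * a \<in> J})" using A J by (auto simp: subr_def ideal_zero)
  show "x + y \<in> (\<Union>r. {a \<in> A. s ^ r * a \<in> J})" if hx: "x \<in> (\<Union>r. {a \<in> A. s ^ r * a \<in> J})"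
    and hy: "y \<in> (\<Union>r. {a \<in> A. s ^ r * a \<in> J})" for x y
  proof -
    obtain r where x: "x \<in> A" "s ^ r * x \<in> J" using hx by blast
    obtain q where y: "y \<in> A" "s ^ q * y \<in> J" using hy by blast
    have sp: "s ^ k \<in> A" for k by (induction k) (use A s in \<open>auto simp: subr_def\<close>)
    have "s ^ (r + q) * (x + y) = s ^ q * (s ^ r * x) + s ^ r * (s ^ q * y)"
      by (simp add: power_add algebra_simps)
    also have "\<dots> \<in> J" using ideal_add[OF J ideal_mult[OF J sp x(2)] ideal_mult[OF J sp y(2)]] .
    finally show ?thesis using x y A by (auto simp: subr_def)
  qed
  show "a * x \<in> (\<Union>r. {a \<in> A. s ^ r * a \<in> J})" if ha: "a \<in> A" and hx: "x \<in> (\<Union>r. {a \<in> A. s ^ r * a \<in> J})" for a x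
  proof -
    obtain r where x: "x \<in> A" "s ^ r * x \<in> J" using hx by blast
    have "s ^ r * (a * x) = a * (s ^ r * x)" by (simp add: ac_simps)
    also have "\<dots> \<in> J" using ideal_mult[OF J ha x(2)] .
    finally show ?thesis using x ha A by (auto simp: subr_def)
  qed
qed

definition clr :: "nat \<Rightarrow> (nat \<Rightarrow>\<^sub>0 nat) \<Rightarrow> (nat \<Rightarrow>\<^sub>0 nat)" where
  "clr m b = Poly_Mapping.update m 0 b"

definition om :: "nat \<Rightarrow> (nat \<Rightarrow> int) \<Rightarrow> (nat \<Rightarrow>\<^sub>0 nat) \<Rightarrow> int" where
  "om m c b = wt m c b + int (Poly_Mapping.lookup b m)"

definition Hop :: "nat \<Rightarrow> (nat \<Rightarrow> int) \<Rightarrow> int \<Rightarrow> 'k::field mpoly \<Rightarrow> 'k mpoly" where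
  "Hop m c N = mapk (\<lambda>b. b + Poly_Mapping.single m (nat (N - wt m c b)))"

definition rho :: "nat \<Rightarrow> 'k::field mpoly \<Rightarrow> 'k mpoly" where
  "rho m = mapk (clr m)"

definition hcmp :: "nat \<Rightarrow> (nat \<Rightarrow> int) \<Rightarrow> int \<Rightarrow> 'k::field mpoly \<Rightarrow> 'k mpoly" where
  "hcmp m c d F = (\<Sum>b\<in>{b\<in>Poly_Mapping.keys F. om m c b = d}. Poly_Mapping.single b (Poly_Mapping.lookup F b))"

definition bnd :: "nat \<Rightarrow> (nat \<Rightarrow> int) \<Rightarrow> int \<Rightarrow> 'k::field mpoly \<Rightarrow> bool" where
  "bnd m c N g \<longleftrightarrow> (\<forall>b\<in>Poly_Mapping.keys g. wt m c b \<le> N)"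

lemma lookup_clr: "Poly_Mapping.lookup (clr m b) i = (if i = m then 0 else Poly_Mapping.lookup b i)"
  by (simp add: clr_def lookup_update)

lemma wt_add: "wt m c (a + b) = wt m c a + wt m c b"
  by (simp add: wt_def lookup_add sum.distrib algebra_simps)

lemma wt_single_m: "wt m c (Poly_Mapping.single m k) = 0"
  by (auto simp: wt_def lookup_single when_def intro!: sum.neutral)

lemma wt_clr: "wt m c (clr m b) = wt m c b"
  by (auto simp: wt_def lookup_clr intro!: sum.cong)

lemma clr_add: "clr m (a + b) = clr m a + clr m b"
  by (rule poly_mapping_eqI) (simp add: lookup_add lookup_clr)

lemma clr_single_add: "Poly_Mapping.lookup b m = 0 \<Longrightarrow> clr m (b + Poly_Mapping.single m k) = b"
  by (rule poly_mapping_eqI) (simp add: lookup_add lookup_clr lookup_single when_def)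

lemma clr_single_m: "clr m (Poly_Mapping.single m k) = 0"
  by (rule poly_mapping_eqI) (simp add: lookup_clr lookup_single when_def)

lemma om_add: "om m c (a + b) = om m c a + om m c b"
  by (simp add: om_def wt_add lookup_add)

lemma om_single_m: "om m c (Poly_Mapping.single m k) = int k"
  by (simp add: om_def wt_single_m)

lemma pin_keys: "F \<in> polys_in V \<Longrightarrow> b \<in> Poly_Mapping.keys F \<Longrightarrow> Poly_Mapping.keys b \<subseteq> V"
  by (auto simp: polys_in_def)

lemma pin_zero: "0 \<in> polys_in V"
  by (simp add: polys_in_def)

lemma pin_one: "1 \<in> polys_in V"
  by (simp add: polys_in_def)

lemma pin_add: "F \<in> polys_in V \<Longrightarrow> G \<in> polys_in V \<Longrightarrow> F + G \<in> polys_in V"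
  unfolding polys_in_def using keys_add[of F G] by blast

lemma pin_mult: "F \<in> polys_in V \<Longrightarrow> G \<in> polys_in V \<Longrightarrow> F * G \<in> polys_in V"
proof -
  assume F: "F \<in> polys_in V" and G: "G \<in> polys_in V"
  show "F * G \<in> polys_in V" unfolding polys_in_def
  proof (intro CollectI ballI)
    fix b assume "b \<in> Poly_Mapping.keys (F * G)"
    then obtain a a' where "b = a + a'" "a \<in> Poly_Mapping.keys F" "a' \<in> Poly_Mapping.keys G"
      using keys_mult[of F G] by blast
    then show "Poly_Mapping.keys b \<subseteq> V"
      using keys_add[of a a'] pin_keys[OF F] pin_keys[OF G] by blast
  qed
qed

lemma pin_single: "Poly_Mapping.keys b \<subseteq> V \<Longrightarrow> Poly_Mapping.single b a \<in> polys_in V"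
  by (simp add: polys_in_def)

lemma pin_mapk: "(\<And>b. b \<in> Poly_Mapping.keys F \<Longrightarrow> Poly_Mapping.keys (\<kappa> b) \<subseteq> V) \<Longrightarrow> mapk \<kappa> F \<in> polys_in V"
  unfolding polys_in_def using keys_mapk[of \<kappa> F] by blast

lemma subr_pin: "subr (polys_in V :: 'k::field mpoly set)"
  unfolding subr_def using pin_zero pin_one pin_add pin_mult by blast

lemma pin_mono: "V \<subseteq> W \<Longrightarrow> polys_in V \<subseteq> polys_in W"
  unfolding polys_in_def by blast

lemma subr_R: "subr (Rring m :: 'k::field mpoly set)"
  unfolding Rring_def by (rule subr_pin)

lemma subr_T: "subr (Rtring m :: 'k::field mpoly set)"
  unfolding Rtring_def by (rule subr_pin)

lemma R_sub_T: "Rring m \<subseteq> Rtring m"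
  unfolding Rring_def Rtring_def by (rule pin_mono) auto

lemma subr_power: "subr A \<Longrightarrow> x \<in> A \<Longrightarrow> x ^ k \<in> A"
  by (induction k) (auto simp: subr_def)

lemma subr_sum: "subr A \<Longrightarrow> (\<And>i. i \<in> S \<Longrightarrow> f i \<in> A) \<Longrightarrow> sum f S \<in> A"
  by (induction S rule: infinite_finite_induct) (auto simp: subr_def)

lemma R_lookup_m: "g \<in> Rring m \<Longrightarrow> b \<in> Poly_Mapping.keys g \<Longrightarrow> Poly_Mapping.lookup b m = 0"
proof -
  assume "g \<in> Rring m" "b \<in> Poly_Mapping.keys g"
  then have "Poly_Mapping.keys b \<subseteq> {..<m}" unfolding Rring_def polys_in_def by blast
  then have "m \<notin> Poly_Mapping.keys b" by auto
  then show ?thesis by (simp add: in_keys_iff)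
qed

lemma lookup_comp: "Poly_Mapping.lookup (hcmp m c d F) b = (if om m c b = d then Poly_Mapping.lookup F b else 0)"
  unfolding hcmp_def by (auto simp: lookup_sum lookup_single when_def in_keys_iff)

lemma comp_add: "hcmp m c d (F + G) = hcmp m c d F + hcmp m c d G"
  by (rule poly_mapping_eqI) (simp add: lookup_comp lookup_add)

lemma comp_zero[simp]: "hcmp m c d 0 = 0"
  by (rule poly_mapping_eqI) (simp add: lookup_comp)

lemma comp_sum: "hcmp m c d (sum f A) = (\<Sum>a\<in>A. hcmp m c d (f a))"
  by (induction A rule: infinite_finite_induct) (auto simp: comp_add)

lemma comp_single: "hcmp m c d (Poly_Mapping.single b a) = (if om m c b = d then Poly_Mapping.single b a else 0)"
  by (rule poly_mapping_eqI) (simp add: lookup_comp lookup_single when_def)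

lemma single_mult_expand: "Poly_Mapping.single b \<alpha> * F = (\<Sum>b'\<in>Poly_Mapping.keys F. Poly_Mapping.single (b + b') (\<alpha> * Poly_Mapping.lookup F b'))"
proof -
  have "Poly_Mapping.single b \<alpha> * F = Poly_Mapping.single b \<alpha> * (\<Sum>b'\<in>Poly_Mapping.keys F. Poly_Mapping.single b' (Poly_Mapping.lookup F b'))"
    using expand[of F] by simp
  also have "\<dots> = (\<Sum>b'\<in>Poly_Mapping.keys F. Poly_Mapping.single (b + b') (\<alpha> * Poly_Mapping.lookup F b'))"
    by (simp add: sum_distrib_left mult_single)
  finally show ?thesis .
qed

lemma comp_single_mult: "hcmp m c d (Poly_Mapping.single b \<alpha> * F) = Poly_Mapping.single b \<alpha> * hcmp m c (d - om m c b) F"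
proof -
  have "hcmp m c d (Poly_Mapping.single b \<alpha> * F) =
     (\<Sum>b'\<in>Poly_Mapping.keys F. if om m c (b + b') = d then Poly_Mapping.single (b + b') (\<alpha> * Poly_Mapping.lookup F b') else 0)"
    by (simp add: single_mult_expand comp_sum comp_single)
  also have "\<dots> = (\<Sum>b'\<in>Poly_Mapping.keys F. Poly_Mapping.single b \<alpha> * (if om m c b' = d - om m c b then Poly_Mapping.single b' (Poly_Mapping.lookup F b') else 0))"
    by (intro sum.cong refl) (auto simp: om_add mult_single)
  also have "\<dots> = Poly_Mapping.single b \<alpha> * hcmp m c (d - om m c b) F"
  proof -
    have "hcmp m c (d - om m c b) F = hcmp m c (d - om m c b) (\<Sum>b'\<in>Poly_Mapping.keys F. Poly_Mapping.single b' (Poly_Mapping.lookup F b'))"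
      using expand[of F] by simp
    then show ?thesis by (simp add: comp_sum comp_single sum_distrib_left)
  qed
  finally show ?thesis .
qed

lemma comp_decomp: "F = (\<Sum>d\<in>om m c ` Poly_Mapping.keys F. hcmp m c d F)"
proof (rule poly_mapping_eqI)
  fix b
  have "Poly_Mapping.lookup (\<Sum>d\<in>om m c ` Poly_Mapping.keys F. hcmp m c d F) b
      = (\<Sum>d\<in>om m c ` Poly_Mapping.keys F. if om m c b = d then Poly_Mapping.lookup F b else 0)"
    by (simp add: lookup_sum lookup_comp)
  also have "\<dots> = Poly_Mapping.lookup F b"
    by (auto simp: in_keys_iff)
  finally show "Poly_Mapping.lookup F b = Poly_Mapping.lookup (\<Sum>d\<in>om m c ` Poly_Mapping.keys F. hcmp m c d F) b" by simp
qed

lemma keys_comp: "b \<in> Poly_Mapping.keys (hcmp m c d F) \<Longrightarrow> b \<in> Poly_Mapping.keys F \<and> om m c b = d"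
  by (auto simp: in_keys_iff lookup_comp split: if_splits)

lemma pin_comp: "F \<in> polys_in V \<Longrightarrow> hcmp m c d F \<in> polys_in V"
  unfolding polys_in_def using keys_comp by blast

lemma rho_add: "rho m (F + G) = rho m F + rho m G"
  by (simp add: rho_def mapk_add)

lemma rho_zero[simp]: "rho m 0 = 0"
  by (simp add: rho_def)

lemma rho_mult: "rho m (F * G) = rho m F * rho m G"
  unfolding rho_def by (rule mapk_mult[symmetric]) (simp add: clr_add)

lemma rho_single: "rho m (Poly_Mapping.single b a) = Poly_Mapping.single (clr m b) a"
  by (simp add: rho_def)

lemma tvar_pow: "tvar m ^ k = Poly_Mapping.single (Poly_Mapping.single m k) 1"
  by (induction k) (simp_all add: tvar_def mult_single single_add[symmetric])

lemma rho_t: "rho m (tvar m) = 1"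
  by (simp add: tvar_def rho_single clr_single_m)

lemma rho_in_R:
  assumes "F \<in> Rtring m" shows "rho m F \<in> Rring m"
  unfolding rho_def Rring_def
proof (rule pin_mapk)
  fix b assume "b \<in> Poly_Mapping.keys F"
  then have "Poly_Mapping.keys b \<subseteq> {..m}" using assms by (auto simp: Rtring_def polys_in_def)
  show "Poly_Mapping.keys (clr m b) \<subseteq> {..<m}"
  proof
    fix x assume "x \<in> Poly_Mapping.keys (clr m b)"
    then have "x \<noteq> m" "Poly_Mapping.lookup b x \<noteq> 0" by (auto simp: in_keys_iff lookup_clr split: if_splits)
    then have "x \<noteq> m" "x \<in> Poly_Mapping.keys b" by (auto simp: in_keys_iff)
    then show "x \<in> {..<m}" using \<open>Poly_Mapping.keys b \<subseteq> {..m}\<close> by fastforce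
  qed
qed

lemma Hop_add: "Hop m c N (F + G) = Hop m c N F + Hop m c N G"
  by (simp add: Hop_def mapk_add)

lemma Hop_zero[simp]: "Hop m c N 0 = 0"
  by (simp add: Hop_def)

lemma Hop_mult:
  assumes "bnd m c N g" "bnd m c M h"
  shows "Hop m c N g * Hop m c M h = Hop m c (N + M) (g * h)"
  unfolding Hop_def
proof (rule mapk_mult)
  fix b b' assume b: "b \<in> Poly_Mapping.keys g" and b': "b' \<in> Poly_Mapping.keys h"
  have "wt m c b \<le> N" "wt m c b' \<le> M" using assms b b' by (auto simp: bnd_def)
  then have "nat (N - wt m c b) + nat (M - wt m c b') = nat (N + M - wt m c (b + b'))"
    by (simp add: wt_add)
  then show "b + Poly_Mapping.single m (nat (N - wt m c b)) + (b' + Poly_Mapping.single m (nat (M - wt m c b'))) =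
         b + b' + Poly_Mapping.single m (nat (N + M - wt m c (b + b')))"
    by (metis (no_types, lifting) add.assoc add.left_commute single_add)
qed

lemma bnd_mult: "bnd m c N g \<Longrightarrow> bnd m c M h \<Longrightarrow> bnd m c (N + M) (g * h)"
  unfolding bnd_def using keys_mult[of g h] by (force simp: wt_add)

lemma bnd_mono: "bnd m c N g \<Longrightarrow> N \<le> N' \<Longrightarrow> bnd m c N' g"
  unfolding bnd_def by force

lemma bnd_add: "bnd m c N g \<Longrightarrow> bnd m c N h \<Longrightarrow> bnd m c N (g + h)"
  unfolding bnd_def using keys_add[of g h] by blast

lemma bnd_zero[simp]: "bnd m c N 0"
  by (simp add: bnd_def)

lemma bnd_one: "bnd m c 0 1"
  by (simp add: bnd_def wt_def)

lemma bmax_ge: "b \<in> Poly_Mapping.keys g \<Longrightarrow> wt m c b \<le> bmax m c g"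
  unfolding bmax_def by (rule Max_ge) auto

lemma bnd_bmax: "bnd m c (bmax m c g) g"
  unfolding bnd_def using bmax_ge by blast

lemma bmax_le: "g \<noteq> 0 \<Longrightarrow> bnd m c N g \<Longrightarrow> bmax m c g \<le> N"
  unfolding bmax_def bnd_def by (subst Max_le_iff) auto

lemma gstar_Hop: "gstar m c g = Hop m c (bmax m c g) g"
  by (simp add: gstar_def Hop_def mapk_def)

lemma Hop_eq:
  assumes "g \<noteq> 0" "bnd m c N g"
  shows "Hop m c N g = tvar m ^ nat (N - bmax m c g) * gstar m c g"
proof -
  have le: "bmax m c g \<le> N" using bmax_le[OF assms] .
  have "tvar m ^ nat (N - bmax m c g) * gstar m c g
      = mapk (\<lambda>b. Poly_Mapping.single m (nat (N - bmax m c g)) + (b + Poly_Mapping.single m (nat (bmax m c g - wt m c b)))) g"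
    by (simp add: tvar_pow gstar_Hop Hop_def single_mult_mapk)
  also have "\<dots> = Hop m c N g"
    unfolding Hop_def
  proof (rule mapk_cong)
    fix b assume "b \<in> Poly_Mapping.keys g"
    then have "wt m c b \<le> bmax m c g" by (rule bmax_ge)
    then have "nat (N - bmax m c g) + nat (bmax m c g - wt m c b) = nat (N - wt m c b)"
      using le by simp
    then show "Poly_Mapping.single m (nat (N - bmax m c g)) + (b + Poly_Mapping.single m (nat (bmax m c g - wt m c b))) =
         b + Poly_Mapping.single m (nat (N - wt m c b))"
      by (metis add.commute add.left_commute single_add)
  qed
  finally show ?thesis by simp
qed

lemma Hop_in_T:
  assumes "g \<in> Rring m" shows "Hop m c N g \<in> Rtring m"
  unfolding Hop_def Rtring_def
proof (rule pin_mapk)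
  fix b assume "b \<in> Poly_Mapping.keys g"
  then have "Poly_Mapping.keys b \<subseteq> {..<m}" using assms by (auto simp: Rring_def polys_in_def)
  moreover have "Poly_Mapping.keys (b + Poly_Mapping.single m (nat (N - wt m c b))) \<subseteq> Poly_Mapping.keys b \<union> {m}"
    using keys_add[of b "Poly_Mapping.single m (nat (N - wt m c b))"] by (auto split: if_splits)
  ultimately show "Poly_Mapping.keys (b + Poly_Mapping.single m (nat (N - wt m c b))) \<subseteq> {..m}"
    by fastforce
qed

lemma gstar_in_T: "g \<in> Rring m \<Longrightarrow> gstar m c g \<in> Rtring m"
  by (simp add: gstar_Hop Hop_in_T)

lemma tvar_in_T: "tvar m \<in> Rtring m"
  by (simp add: tvar_def Rtring_def pin_single)

lemma tpow_in_T: "tvar m ^ k \<in> Rtring m"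
  by (rule subr_power[OF subr_T tvar_in_T])

lemma Hop_one: "Hop m c 0 1 = 1"
  by (simp add: Hop_def mapk_def wt_def)

lemma Hop_prod_list:
  assumes "\<And>g. g \<in> set gs \<Longrightarrow> bnd m c (\<beta> g) g"
  shows "Hop m c (sum_list (map \<beta> gs)) (prod_list gs) = prod_list (map (\<lambda>g. Hop m c (\<beta> g) g) gs)
       \<and> bnd m c (sum_list (map \<beta> gs)) (prod_list gs)"
  using assms
proof (induction gs)
  case Nil
  then show ?case by (simp add: Hop_one bnd_one)
next
  case (Cons g gs)
  then have IH: "Hop m c (sum_list (map \<beta> gs)) (prod_list gs) = prod_list (map (\<lambda>g. Hop m c (\<beta> g) g) gs)"
     "bnd m c (sum_list (map \<beta> gs)) (prod_list gs)" and bg: "bnd m c (\<beta> g) g" by auto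
  show ?case
    using Hop_mult[OF bg IH(2)] IH(1) bnd_mult[OF bg IH(2)] by simp
qed

lemma gens_sub_T: "L \<subseteq> Rring m \<Longrightarrow> gstar m c ` (L - {0}) \<subseteq> Rtring m"
proof
  fix x assume "L \<subseteq> Rring m" "x \<in> gstar m c ` (L - {0})"
  then obtain g where "g \<in> Rring m" "x = gstar m c g" by blast
  then show "x \<in> Rtring m" using gstar_in_T by simp
qed

lemma Lstar_ideal: "L \<subseteq> Rring m \<Longrightarrow> ideal_in (Rtring m) (Lstar m c L)"
  unfolding Lstar_def by (rule ideal_gen_ideal[OF subr_T gens_sub_T])

lemma gstar_in_Lstar: "g \<in> L \<Longrightarrow> g \<noteq> 0 \<Longrightarrow> gstar m c g \<in> Lstar m c L"
  unfolding Lstar_def by (rule subsetD[OF ideal_gen_sub]) simp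

lemma Hop_in_Lstar:
  assumes L: "L \<subseteq> Rring m" and g: "g \<in> L" and b: "bnd m c N g"
  shows "Hop m c N g \<in> Lstar m c L"
proof (cases "g = 0")
  case True
  then show ?thesis using ideal_zero[OF Lstar_ideal[OF L]] by simp
next
  case False
  show ?thesis using Hop_eq[OF False b] ideal_mult[OF Lstar_ideal[OF L] tpow_in_T gstar_in_Lstar[OF g False]]
    by simp
qed

definition Zset :: "nat \<Rightarrow> (nat \<Rightarrow> int) \<Rightarrow> 'k::field mpoly set \<Rightarrow> 'k mpoly set" where
  "Zset m c L = {F \<in> Rtring m. \<forall>d. rho m (hcmp m c d F) \<in> L}"

context
  fixes m :: nat and c :: "nat \<Rightarrow> int" and L :: "'k::field mpoly set"
  assumes L: "ideal_in (Rring m) L"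
begin

lemma LR: "L \<subseteq> Rring m" using L unfolding ideal_in_def by blast

lemma Z_zero: "0 \<in> Zset m c L"
  using ideal_zero[OF L] pin_zero by (auto simp: Zset_def Rtring_def)

lemma Z_add: "F \<in> Zset m c L \<Longrightarrow> G \<in> Zset m c L \<Longrightarrow> F + G \<in> Zset m c L"
  unfolding Zset_def using ideal_add[OF L] pin_add
  by (auto simp: comp_add rho_add Rtring_def)

lemma Z_sum: "(\<And>i. i \<in> S \<Longrightarrow> f i \<in> Zset m c L) \<Longrightarrow> sum f S \<in> Zset m c L"
  by (induction S rule: infinite_finite_induct) (auto simp: Z_zero Z_add)

lemma Z_mono:
  assumes F: "F \<in> Zset m c L" and b: "Poly_Mapping.keys b \<subseteq> {..m}"
  shows "Poly_Mapping.single b \<alpha> * F \<in> Zset m c L"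
proof -
  have sT: "Poly_Mapping.single b \<alpha> \<in> Rtring m" using b by (simp add: Rtring_def pin_single)
  have FT: "F \<in> Rtring m" using F by (simp add: Zset_def)
  have sR: "rho m (Poly_Mapping.single b \<alpha>) \<in> Rring m" by (rule rho_in_R[OF sT])
  have "rho m (hcmp m c d (Poly_Mapping.single b \<alpha> * F)) \<in> L" for d
  proof -
    have "rho m (hcmp m c d (Poly_Mapping.single b \<alpha> * F)) = rho m (Poly_Mapping.single b \<alpha>) * rho m (hcmp m c (d - om m c b) F)"
      by (simp add: comp_single_mult rho_mult)
    also have "\<dots> \<in> L" using ideal_mult[OF L sR] F by (simp add: Zset_def)
    finally show ?thesis .
  qed
  moreover have "Poly_Mapping.single b \<alpha> * F \<in> Rtring m"
    using sT FT by (simp add: Rtring_def pin_mult)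
  ultimately show ?thesis by (simp add: Zset_def)
qed

lemma Z_mult:
  assumes a: "a \<in> Rtring m" and F: "F \<in> Zset m c L"
  shows "a * F \<in> Zset m c L"
proof -
  have "a * F = (\<Sum>b\<in>Poly_Mapping.keys a. Poly_Mapping.single b (Poly_Mapping.lookup a b)) * F"
    by (rule arg_cong[where f="\<lambda>x. x * F", OF expand[of a]])
  also have "\<dots> = (\<Sum>b\<in>Poly_Mapping.keys a. Poly_Mapping.single b (Poly_Mapping.lookup a b) * F)"
    by (rule sum_distrib_right)
  also have "\<dots> \<in> Zset m c L"
  proof (rule Z_sum)
    fix b assume "b \<in> Poly_Mapping.keys a"
    then have "Poly_Mapping.keys b \<subseteq> {..m}" using a by (auto simp: Rtring_def polys_in_def)
    then show "Poly_Mapping.single b (Poly_Mapping.lookup a b) * F \<in> Zset m c L" by (rule Z_mono[OF F])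
  qed
  finally show ?thesis .
qed

lemma Z_ideal: "ideal_in (Rtring m) (Zset m c L)"
  unfolding ideal_in_def using Z_zero Z_add Z_mult by (auto simp: Zset_def)

lemma om_gstar_keys:
  assumes g: "g \<in> Rring m" and x: "x \<in> Poly_Mapping.keys (gstar m c g)"
  shows "om m c x = bmax m c g"
proof -
  obtain b where b: "b \<in> Poly_Mapping.keys g" and xb: "x = b + Poly_Mapping.single m (nat (bmax m c g - wt m c b))"
    using x keys_mapk unfolding gstar_Hop Hop_def by blast
  have "Poly_Mapping.lookup b m = 0" by (rule R_lookup_m[OF g b])
  moreover have "wt m c b \<le> bmax m c g" by (rule bmax_ge[OF b])
  ultimately show ?thesis using xb by (simp add: om_add om_single_m) (simp add: om_def)
qed

lemma rho_gstar: "g \<in> Rring m \<Longrightarrow> rho m (gstar m c g) = g"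
  unfolding gstar_Hop Hop_def rho_def mapk_comp
  by (subst mapk_id[symmetric, of g], rule mapk_cong) (simp add: clr_single_add R_lookup_m)

lemma comp_gstar: "g \<in> Rring m \<Longrightarrow> hcmp m c d (gstar m c g) = (if d = bmax m c g then gstar m c g else 0)"
  by (rule poly_mapping_eqI) (auto simp: lookup_comp in_keys_iff dest: om_gstar_keys)

lemma Lstar_sub_Z: "Lstar m c L \<subseteq> Zset m c L"
  unfolding Lstar_def
proof (rule ideal_gen_min[OF Z_ideal])
  show "gstar m c ` (L - {0}) \<subseteq> Zset m c L"
  proof
    fix G assume "G \<in> gstar m c ` (L - {0})"
    then obtain g where g: "g \<in> L" "G = gstar m c g" by blast
    have gR: "g \<in> Rring m" using g LR by blast
    have "rho m (hcmp m c d G) \<in> L" for d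
      using g(1) ideal_zero[OF L] by (auto simp: g(2) comp_gstar[OF gR] rho_gstar[OF gR])
    then show "G \<in> Zset m c L" using gstar_in_T[OF gR] g by (simp add: Zset_def)
  qed
qed

lemma comp_Hop_rho:
  "hcmp m c d F = Hop m c d (rho m (hcmp m c d F))"
  unfolding Hop_def rho_def mapk_comp
proof (subst mapk_id[symmetric], rule mapk_cong)
  fix b assume "b \<in> Poly_Mapping.keys (hcmp m c d F)"
  then have "om m c b = d" using keys_comp by blast
  then have "nat (d - wt m c (clr m b)) = Poly_Mapping.lookup b m" by (auto simp: om_def wt_clr)
  then show "b = clr m b + Poly_Mapping.single m (nat (d - wt m c (clr m b)))"
    by (intro poly_mapping_eqI) (simp add: lookup_add lookup_clr lookup_single when_def)
qed

lemma bnd_rho_comp: "bnd m c d (rho m (hcmp m c d F))"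
  unfolding bnd_def
proof
  fix x assume "x \<in> Poly_Mapping.keys (rho m (hcmp m c d F))"
  then obtain b where b: "b \<in> Poly_Mapping.keys (hcmp m c d F)" "x = clr m b"
    using keys_mapk unfolding rho_def by blast
  then have "om m c b = d" using keys_comp by blast
  then show "wt m c x \<le> d" using b by (auto simp: om_def wt_clr)
qed

lemma Z_sub_Lstar: "Zset m c L \<subseteq> Lstar m c L"
proof
  fix F assume F: "F \<in> Zset m c L"
  have "F = (\<Sum>d\<in>om m c ` Poly_Mapping.keys F. hcmp m c d F)" by (rule comp_decomp)
  also have "\<dots> \<in> Lstar m c L"
  proof (rule ideal_sum[OF Lstar_ideal[OF LR]])
    fix d
    have "rho m (hcmp m c d F) \<in> L" using F by (simp add: Zset_def)
    then have "Hop m c d (rho m (hcmp m c d F)) \<in> Lstar m c L"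
      using Hop_in_Lstar[OF LR _ bnd_rho_comp] by blast
    then show "hcmp m c d F \<in> Lstar m c L" using comp_Hop_rho by metis
  qed
  finally show "F \<in> Lstar m c L" .
qed

lemma Lstar_sat1:
  assumes F: "F \<in> Rtring m" and tF: "tvar m * F \<in> Lstar m c L"
  shows "F \<in> Lstar m c L"
proof -
  have Z: "tvar m * F \<in> Zset m c L" using tF Lstar_sub_Z by blast
  have "rho m (hcmp m c d F) \<in> L" for d
  proof -
    have "hcmp m c (d + 1) (tvar m * F) = tvar m * hcmp m c d F"
      using comp_single_mult[of m c "d+1" "Poly_Mapping.single m 1" 1 F]
      by (simp add: tvar_def om_single_m)
    then have "rho m (hcmp m c (d + 1) (tvar m * F)) = rho m (hcmp m c d F)"
      by (simp add: rho_mult rho_t)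
    then show ?thesis using Z by (metis (mono_tags, lifting) Zset_def mem_Collect_eq)
  qed
  then have "F \<in> Zset m c L" using F by (simp add: Zset_def)
  then show ?thesis using Z_sub_Lstar by blast
qed

lemma Lstar_sat:
  "F \<in> Rtring m \<Longrightarrow> tvar m ^ r * F \<in> Lstar m c L \<Longrightarrow> F \<in> Lstar m c L"
proof (induction r arbitrary: F)
  case 0
  then show ?case by simp
next
  case (Suc r)
  have tF: "tvar m * F \<in> Rtring m" using Suc.prems(1) tvar_in_T subr_T by (auto simp: subr_def)
  have "tvar m ^ r * (tvar m * F) \<in> Lstar m c L" using Suc.prems(2) by (simp add: ac_simps)
  then have "tvar m * F \<in> Lstar m c L" using Suc.IH[OF tF] by blast
  then show ?case by (rule Lstar_sat1[OF Suc.prems(1)])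
qed

end

lemma add0_pm: "(b::nat \<Rightarrow>\<^sub>0 nat) + b' = 0 \<longleftrightarrow> b = 0 \<and> b' = 0"
  by (auto simp: poly_mapping_eq_iff fun_eq_iff lookup_add)

lemma lookup_delta: "(\<Sum>b\<in>Poly_Mapping.keys F. if b = 0 then Poly_Mapping.lookup F b else 0) = Poly_Mapping.lookup F 0"
  by (auto simp: in_keys_iff)

lemma lookup_mult_zero: "Poly_Mapping.lookup ((F::'k::field mpoly) * G) 0 = Poly_Mapping.lookup F 0 * Poly_Mapping.lookup G 0"
proof -
  have "Poly_Mapping.lookup (F * G) 0 = (\<Sum>b\<in>Poly_Mapping.keys F. \<Sum>b'\<in>Poly_Mapping.keys G.
      (if b = 0 then Poly_Mapping.lookup F b else 0) * (if b' = 0 then Poly_Mapping.lookup G b' else 0))"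
    by (subst mult_expand) (auto simp: lookup_sum lookup_single when_def add0_pm intro!: sum.cong)
  also have "\<dots> = (\<Sum>b\<in>Poly_Mapping.keys F. if b = 0 then Poly_Mapping.lookup F b else 0) *
                  (\<Sum>b'\<in>Poly_Mapping.keys G. if b' = 0 then Poly_Mapping.lookup G b' else 0)"
    by (rule sum_product[symmetric])
  also have "\<dots> = Poly_Mapping.lookup F 0 * Poly_Mapping.lookup G 0"
    by (simp only: lookup_delta)
  finally show ?thesis .
qed

lemma U_one: "1 \<in> Uset m"
  by (simp add: Uset_def pin_one)

lemma U_nz: "u \<in> Uset m \<Longrightarrow> u \<noteq> 0"
  by (auto simp: Uset_def)

lemma U_T: "u \<in> Uset m \<Longrightarrow> u \<in> Rtring m"
  unfolding Uset_def Rtring_def using pin_mono[of "{m}" "{..m}"] by auto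

lemma U_mult: "u \<in> Uset m \<Longrightarrow> v \<in> Uset m \<Longrightarrow> u * v \<in> Uset m"
  by (simp add: Uset_def pin_mult lookup_mult_zero)

lemma S_iff: "x \<in> Sring m \<longleftrightarrow> (\<exists>f u. x = Fract f u \<and> f \<in> Rtring m \<and> u \<in> Uset m)"
  by (auto simp: Sring_def)

lemma frac_in_S: "F \<in> Rtring m \<Longrightarrow> u \<in> Uset m \<Longrightarrow> Fract F u \<in> Sring m"
  by (auto simp: Sring_def)

lemma subr_S: "subr (Sring m :: 'k::field mpoly fract set)"
  unfolding subr_def
proof (intro conjI ballI)
  show "0 \<in> (Sring m :: 'k mpoly fract set)"
    using frac_in_S[OF pin_zero[of "{..m}", folded Rtring_def] U_one] by (simp add: fract_collapse)
  show "1 \<in> (Sring m :: 'k mpoly fract set)"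
    using frac_in_S[OF pin_one[of "{..m}", folded Rtring_def] U_one] by (simp add: fract_collapse)
  fix x y :: "'k mpoly fract" assume x: "x \<in> Sring m" and y: "y \<in> Sring m"
  obtain f u where f: "x = Fract f u" "f \<in> Rtring m" "u \<in> Uset m" using x by (auto simp: S_iff)
  obtain g v where g: "y = Fract g v" "g \<in> Rtring m" "v \<in> Uset m" using y by (auto simp: S_iff)
  have T: "subr (Rtring m :: 'k mpoly set)" by (rule subr_T)
  have uT: "u \<in> Rtring m" "v \<in> Rtring m" using f g U_T by auto
  have "f * v + g * u \<in> Rtring m" using T f g uT by (simp add: subr_def)
  moreover have "x + y = Fract (f * v + g * u) (u * v)" using f g U_nz[OF f(3)] U_nz[OF g(3)] by simp
  ultimately show "x + y \<in> Sring m"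
    using frac_in_S[OF _ U_mult[OF f(3) g(3)]] by simp
  have "f * g \<in> Rtring m" using T f g by (simp add: subr_def)
  moreover have "x * y = Fract (f * g) (u * v)" using f g by simp
  ultimately show "x * y \<in> Sring m"
    using frac_in_S[OF _ U_mult[OF f(3) g(3)]] by simp
qed

lemma emb_in_S: "F \<in> Rtring m \<Longrightarrow> emb F \<in> Sring m"
  unfolding emb_def by (rule frac_in_S[OF _ U_one])

lemma emb_add: "emb (F + G) = emb F + emb G"
  by (simp add: emb_def)

lemma emb_mult: "emb (F * G) = emb F * emb G"
  by (simp add: emb_def)

lemma emb_zero: "emb 0 = 0"
  by (simp add: emb_def fract_collapse)

lemma emb_one: "emb 1 = 1"
  by (simp add: emb_def fract_collapse)

lemma emb_pow: "emb (F ^ r) = emb F ^ r"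
  by (induction r) (simp_all add: emb_one emb_mult)

lemma emb_prod_list: "emb (prod_list xs) = prod_list (map emb xs)"
  by (induction xs) (simp_all add: emb_one emb_mult)

lemma ideal_pre:
  fixes K :: "'k::field mpoly fract set"
  assumes K: "ideal_in (Sring m) K"
  shows "ideal_in (Rtring m) {F \<in> Rtring m. emb F \<in> K}"
  unfolding ideal_in_def
proof (intro conjI ballI)
  show "{F \<in> Rtring m. emb F \<in> K} \<subseteq> Rtring m" by blast
  show "0 \<in> {F \<in> Rtring m. emb F \<in> K}" using ideal_zero[OF K] pin_zero
    by (simp add: emb_zero Rtring_def)
  fix x y assume x: "x \<in> {F \<in> Rtring m. emb F \<in> K}" and y: "y \<in> {F \<in> Rtring m. emb F \<in> K}"
  have "x + y \<in> Rtring m" using subr_T[of m] x y unfolding subr_def by blast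
  then show "x + y \<in> {F \<in> Rtring m. emb F \<in> K}"
    using ideal_add[OF K] x y by (simp add: emb_add)
next
  fix a x :: "'k mpoly" assume a: "a \<in> Rtring m" and x: "x \<in> {F \<in> Rtring m. emb F \<in> K}"
  have "emb a * emb x \<in> K" using ideal_mult[OF K emb_in_S[OF a]] x by simp
  moreover have "a * x \<in> Rtring m" using a x subr_T by (auto simp: subr_def)
  ultimately show "a * x \<in> {F \<in> Rtring m. emb F \<in> K}" by (simp add: emb_mult)
qed

lemma Ltilde_char:
  fixes J :: "'k::field mpoly set"
  assumes J: "ideal_in (Rtring m) J"
  shows "ideal_gen (Sring m) (emb ` J) = {Fract F u | F u. F \<in> J \<and> u \<in> Uset m}"
proof
  have JT: "J \<subseteq> Rtring m" using J by (simp add: ideal_in_def)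
  have eS: "emb ` J \<subseteq> Sring m"
  proof
    fix x assume "x \<in> emb ` J"
    then obtain F where "F \<in> J" "x = emb F" by blast
    then show "x \<in> Sring m" using JT emb_in_S by blast
  qed
  let ?C = "{Fract F u | F u. F \<in> J \<and> u \<in> Uset m}"
  have Cideal: "ideal_in (Sring m) ?C"
    unfolding ideal_in_def
  proof (intro conjI ballI)
    show "?C \<subseteq> Sring m"
    proof
      fix x assume "x \<in> ?C"
      then obtain F u where "x = Fract F u" "F \<in> J" "u \<in> Uset m" by blast
      then show "x \<in> Sring m" using JT frac_in_S by blast
    qed
    have "Fract 0 1 \<in> ?C" using ideal_zero[OF J] U_one by blast
    then show "0 \<in> ?C" by (simp add: fract_collapse)
    fix x y assume x: "x \<in> ?C" and y: "y \<in> ?C"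
    obtain F u where F: "x = Fract F u" "F \<in> J" "u \<in> Uset m" using x by blast
    obtain G v where G: "y = Fract G v" "G \<in> J" "v \<in> Uset m" using y by blast
    have "F * v + G * u \<in> J"
      using ideal_add[OF J ideal_mult_right[OF J U_T[OF G(3)] F(2)] ideal_mult_right[OF J U_T[OF F(3)] G(2)]] .
    moreover have "x + y = Fract (F * v + G * u) (u * v)" using F G U_nz[OF F(3)] U_nz[OF G(3)] by simp
    ultimately show "x + y \<in> ?C" using U_mult[OF F(3) G(3)] by blast
  next
    fix a x :: "'k mpoly fract" assume a: "a \<in> Sring m" and x: "x \<in> ?C"
    obtain F u where F: "x = Fract F u" "F \<in> J" "u \<in> Uset m" using x by blast
    obtain f w where f: "a = Fract f w" "f \<in> Rtring m" "w \<in> Uset m" using a by (auto simp: S_iff)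
    have "f * F \<in> J" using ideal_mult[OF J f(2) F(2)] .
    moreover have "a * x = Fract (f * F) (w * u)" using F f by simp
    ultimately show "a * x \<in> ?C" using U_mult[OF f(3) F(3)] by blast
  qed
  show "ideal_gen (Sring m) (emb ` J) \<subseteq> ?C"
  proof (rule ideal_gen_min[OF Cideal])
    show "emb ` J \<subseteq> ?C" using U_one unfolding emb_def by blast
  qed
  show "?C \<subseteq> ideal_gen (Sring m) (emb ` J)"
  proof
    fix x assume "x \<in> ?C"
    then obtain F u where F: "x = Fract F u" "F \<in> J" "u \<in> Uset m" by blast
    have "x = Fract 1 u * emb F" using F by (simp add: emb_def)
    moreover have "Fract 1 u \<in> Sring m" using frac_in_S[OF pin_one[of "{..m}", folded Rtring_def] F(3)] .
    moreover have "emb F \<in> ideal_gen (Sring m) (emb ` J)" using F(2) ideal_gen_sub by blast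
    ultimately show "x \<in> ideal_gen (Sring m) (emb ` J)"
      using ideal_mult[OF ideal_gen_ideal[OF subr_S eS]] by simp
  qed
qed

lemma Ltilde_ideal:
  assumes L: "L \<subseteq> Rring m"
  shows "ideal_in (Sring m) (Ltilde m c L)"
  unfolding Ltilde_def
proof (rule ideal_gen_ideal[OF subr_S])
  show "emb ` Lstar m c L \<subseteq> Sring m"
  proof
    fix x assume "x \<in> emb ` Lstar m c L"
    then obtain F where "F \<in> Lstar m c L" "x = emb F" by blast
    then show "x \<in> Sring m" using ideal_subA[OF Lstar_ideal[OF L]] emb_in_S by blast
  qed
qed

lemma Ltilde_sat:
  assumes L: "ideal_in (Rring m) L" and a: "a \<in> Sring m"
    and ta: "emb (tvar m) ^ r * a \<in> Ltilde m c L"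
  shows "a \<in> Ltilde m c L"
proof -
  have LR: "L \<subseteq> Rring m" using L by (simp add: ideal_in_def)
  have J: "ideal_in (Rtring m) (Lstar m c L)" by (rule Lstar_ideal[OF LR])
  have char: "Ltilde m c L = {Fract F u | F u. F \<in> Lstar m c L \<and> u \<in> Uset m}"
    unfolding Ltilde_def by (rule Ltilde_char[OF J])
  obtain f w where f: "a = Fract f w" "f \<in> Rtring m" "w \<in> Uset m" using a by (auto simp: S_iff)
  obtain F u where F: "emb (tvar m) ^ r * a = Fract F u" "F \<in> Lstar m c L" "u \<in> Uset m"
    using ta char by blast
  have "emb (tvar m) ^ r * a = emb (tvar m ^ r) * Fract f w"
    by (simp only: emb_pow f(1))
  also have "\<dots> = Fract (tvar m ^ r * f) w" by (simp add: emb_def)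
  finally have "emb (tvar m) ^ r * a = Fract (tvar m ^ r * f) w" .
  then have "Fract (tvar m ^ r * f) w = Fract F u" using F by simp
  then have eq: "tvar m ^ r * f * u = F * w" using U_nz[OF f(3)] U_nz[OF F(3)] by (simp add: eq_fract)
  have "F * w \<in> Lstar m c L" by (rule ideal_mult_right[OF J U_T[OF f(3)] F(2)])
  then have "tvar m ^ r * (f * u) \<in> Lstar m c L" using eq by (simp add: ac_simps)
  moreover have fu: "f * u \<in> Rtring m" using f(2) U_T[OF F(3)] subr_T by (auto simp: subr_def)
  ultimately have "f * u \<in> Lstar m c L" using Lstar_sat[OF L fu] by blast
  moreover have "a = Fract (f * u) (w * u)"
    using f U_nz[OF F(3)] mult_fract_cancel[of u f w] by (simp add: ac_simps)
  ultimately show ?thesis using char U_mult[OF f(3) F(3)] by blast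
qed

lemma exists_bnd: "\<exists>N\<ge>0. \<forall>f\<in>set fs. bnd m c N f"
proof (induction fs)
  case Nil
  then show ?case by auto
next
  case (Cons f fs)
  then obtain N where N: "N \<ge> 0" "\<forall>f\<in>set fs. bnd m c N f" by blast
  let ?N = "max N (bmax m c f)"
  have "bnd m c ?N f" by (rule bnd_mono[OF bnd_bmax]) simp
  moreover have "\<forall>f\<in>set fs. bnd m c ?N f" using N bnd_mono by (metis max.cobounded1)
  ultimately show ?case using N(1) by (intro exI[of _ ?N]) auto
qed

lemma list_in_image: "set ys \<subseteq> f ` S \<Longrightarrow> \<exists>xs. ys = map f xs \<and> set xs \<subseteq> S"
proof (induction ys)
  case Nil
  then show ?case by simp
next
  case (Cons y ys)
  then obtain xs where xs: "ys = map f xs" "set xs \<subseteq> S" by auto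
  obtain x where "x \<in> S" "y = f x" using Cons.prems by auto
  then show ?case using xs by (intro exI[of _ "x # xs"]) auto
qed

context
  fixes m :: nat and c :: "nat \<Rightarrow> int" and I :: "'k::field mpoly set" and n :: nat
  assumes I: "ideal_in (Rring m) I"
begin

lemma IR: "I \<subseteq> Rring m" using I by (simp add: ideal_in_def)

lemma InI: "ideal_in (Rring m) (ideal_pow (Rring m) I n)"
  by (rule ideal_pow_ideal[OF subr_R IR])

lemma InR: "ideal_pow (Rring m) I n \<subseteq> Rring m"
  using InI by (simp add: ideal_in_def)

lemma J1T: "Lstar m c I \<subseteq> Rtring m"
  using Lstar_ideal[OF IR] by (simp add: ideal_in_def)

lemma JnI: "ideal_in (Rtring m) (ideal_pow (Rtring m) (Lstar m c I) n)"
  by (rule ideal_pow_ideal[OF subr_T J1T])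

lemma Hop_pow_in:
  assumes g: "g \<noteq> 0" and b: "bnd m c N g" and r: "tvar m ^ r * gstar m c g \<in> ideal_pow (Rtring m) (Lstar m c I) n"
    and N: "bmax m c g + int r \<le> N"
  shows "Hop m c N g \<in> ideal_pow (Rtring m) (Lstar m c I) n"
proof -
  let ?k = "nat (N - bmax m c g)"
  have k: "?k = (?k - r) + r" using N by linarith
  have "Hop m c N g = tvar m ^ ?k * gstar m c g" by (rule Hop_eq[OF g b])
  also have "\<dots> = tvar m ^ (?k - r) * (tvar m ^ r * gstar m c g)"
    by (subst k) (simp add: power_add ac_simps)
  also have "\<dots> \<in> ideal_pow (Rtring m) (Lstar m c I) n"
    by (rule ideal_mult[OF JnI tpow_in_T r])
  finally show ?thesis .
qed

lemma Q_from_Hop: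
  assumes g: "g \<noteq> 0" and b: "bnd m c N g" and h: "Hop m c N g \<in> ideal_pow (Rtring m) (Lstar m c I) n"
  shows "\<exists>r. tvar m ^ r * gstar m c g \<in> ideal_pow (Rtring m) (Lstar m c I) n"
  using h Hop_eq[OF g b] by metis

lemma P1:
  assumes g: "g \<in> ideal_pow (Rring m) I n"
  shows "g = 0 \<or> (\<exists>r. tvar m ^ r * gstar m c g \<in> ideal_pow (Rtring m) (Lstar m c I) n)"
proof -
  let ?Jn = "ideal_pow (Rtring m) (Lstar m c I) n"
  let ?Q = "\<lambda>g. g = 0 \<or> (\<exists>r. tvar m ^ r * gstar m c g \<in> ?Jn)"
  let ?G = "{prod_list xs |xs. length xs = n \<and> set xs \<subseteq> I}"
  have g': "g \<in> ideal_gen (Rring m) ?G" using g by (simp add: ideal_pow_def)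
  have GR: "?G \<subseteq> Rring m"
  proof
    fix y assume "y \<in> ?G"
    then obtain xs where "y = prod_list xs" "set xs \<subseteq> I" by blast
    then show "y \<in> Rring m" using subr_prod_list[OF subr_R, of xs] IR by auto
  qed
  show ?thesis
  proof (rule ideal_gen_induct[OF g' _ GR])
    show "ideal_in (Rring m) {y \<in> Rring m. ?Q y}"
      unfolding ideal_in_def
    proof (intro conjI ballI)
      show "{y \<in> Rring m. ?Q y} \<subseteq> Rring m" by blast
      show "0 \<in> {y \<in> Rring m. ?Q y}" using pin_zero by (simp add: Rring_def)
    next
      fix g h :: "'k mpoly" assume gq: "g \<in> {y \<in> Rring m. ?Q y}" and hq: "h \<in> {y \<in> Rring m. ?Q y}"
      have sR: "g + h \<in> Rring m" using gq hq pin_add[of g "{..<m}" h] by (simp add: Rring_def)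
      have "?Q (g + h)"
      proof (cases "g + h = 0")
        case True then show ?thesis by simp
      next
        case gh: False
        show ?thesis
        proof (cases "g = 0")
          case True then show ?thesis using hq by simp
        next
          case g0: False
          show ?thesis
          proof (cases "h = 0")
            case True then show ?thesis using gq by simp
          next
            case h0: False
            obtain r where r: "tvar m ^ r * gstar m c g \<in> ?Jn" using gq g0 by blast
            obtain s where s: "tvar m ^ s * gstar m c h \<in> ?Jn" using hq h0 by blast
            define N where "N = max (max (bmax m c g + int r) (bmax m c h + int s)) (bmax m c (g + h))"
            have bg: "bnd m c N g" by (rule bnd_mono[OF bnd_bmax]) (simp add: N_def)
            have bh: "bnd m c N h" by (rule bnd_mono[OF bnd_bmax]) (simp add: N_def)
            have bgh: "bnd m c N (g + h)" by (rule bnd_mono[OF bnd_bmax]) (simp add: N_def)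
            have "Hop m c N g \<in> ?Jn" by (rule Hop_pow_in[OF g0 bg r]) (simp add: N_def)
            moreover have "Hop m c N h \<in> ?Jn" by (rule Hop_pow_in[OF h0 bh s]) (simp add: N_def)
            ultimately have "Hop m c N (g + h) \<in> ?Jn" using ideal_add[OF JnI] by (simp add: Hop_add)
            then show ?thesis using Q_from_Hop[OF gh bgh] by blast
          qed
        qed
      qed
      then show "g + h \<in> {y \<in> Rring m. ?Q y}" using sR by blast
    next
      fix a g :: "'k mpoly" assume a: "a \<in> Rring m" and gq: "g \<in> {y \<in> Rring m. ?Q y}"
      have pR: "a * g \<in> Rring m" using a gq pin_mult[of a "{..<m}" g] by (simp add: Rring_def)
      have "?Q (a * g)"
      proof (cases "a * g = 0")
        case True then show ?thesis by simp
      next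
        case ag: False
        then have a0: "a \<noteq> 0" and g0: "g \<noteq> 0" by auto
        obtain r where r: "tvar m ^ r * gstar m c g \<in> ?Jn" using gq g0 by blast
        define N2 where "N2 = bmax m c g + int r"
        have bg: "bnd m c N2 g" by (rule bnd_mono[OF bnd_bmax]) (simp add: N2_def)
        have "Hop m c N2 g \<in> ?Jn" by (rule Hop_pow_in[OF g0 bg r]) (simp add: N2_def)
        then have "Hop m c (bmax m c a) a * Hop m c N2 g \<in> ?Jn"
          by (rule ideal_mult[OF JnI Hop_in_T[OF a]])
        then have "Hop m c (bmax m c a + N2) (a * g) \<in> ?Jn" by (simp add: Hop_mult[OF bnd_bmax bg])
        then show ?thesis using Q_from_Hop[OF ag bnd_mult[OF bnd_bmax bg]] by blast
      qed
      then show "a * g \<in> {y \<in> Rring m. ?Q y}" using pR by blast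
    qed
  next
    fix p assume "p \<in> ?G"
    then obtain fs where p: "p = prod_list fs" "length fs = n" "set fs \<subseteq> I" by blast
    show "?Q p"
    proof (cases "p = 0")
      case True then show ?thesis by simp
    next
      case p0: False
      obtain N2 where N2: "\<forall>f\<in>set fs. bnd m c N2 f" using exists_bnd by blast
      have HP: "Hop m c (sum_list (map (\<lambda>_. N2) fs)) (prod_list fs) = prod_list (map (\<lambda>g. Hop m c N2 g) fs)
       \<and> bnd m c (sum_list (map (\<lambda>_. N2) fs)) (prod_list fs)"
        by (rule Hop_prod_list) (use N2 in auto)
      have "prod_list (map (\<lambda>g. Hop m c N2 g) fs) \<in> ?Jn"
      proof (rule ideal_pow_gen)
        show "length (map (\<lambda>g. Hop m c N2 g) fs) = n" using p by simp
        show "set (map (\<lambda>g. Hop m c N2 g) fs) \<subseteq> Lstar m c I"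
        proof
          fix x assume "x \<in> set (map (\<lambda>g. Hop m c N2 g) fs)"
          then obtain f where f: "f \<in> set fs" "x = Hop m c N2 f" by auto
          then show "x \<in> Lstar m c I" using Hop_in_Lstar[OF IR _ ] N2 p(3) by blast
        qed
      qed
      then show ?thesis using Q_from_Hop[OF p0, of "sum_list (map (\<lambda>_. N2) fs)"] HP p(1) by simp
    qed
  qed
qed

lemma P2:
  assumes ys: "set ys \<subseteq> Lstar m c I" "length ys = n"
  shows "prod_list ys \<in> Lstar m c (ideal_pow (Rring m) I n)"
proof (rule ideal_gen_prod[OF subr_T gens_sub_T[OF IR] Lstar_ideal[OF InR]])
  show "set ys \<subseteq> ideal_gen (Rtring m) (gstar m c ` (I - {0}))" using ys(1) by (simp add: Lstar_def)
  show "length ys = n" by (rule ys(2))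
next
  fix w :: "'k mpoly" and zs assume w: "w \<in> Rtring m" and zs: "set zs \<subseteq> gstar m c ` (I - {0})" "length zs = n"
  obtain gs where gs: "zs = map (gstar m c) gs" "set gs \<subseteq> I - {0}" using list_in_image[OF zs(1)] by blast
  have HP: "Hop m c (sum_list (map (bmax m c) gs)) (prod_list gs) = prod_list (map (\<lambda>g. Hop m c (bmax m c g) g) gs)
       \<and> bnd m c (sum_list (map (bmax m c) gs)) (prod_list gs)"
    by (rule Hop_prod_list) (rule bnd_bmax)
  have e: "prod_list zs = Hop m c (sum_list (map (bmax m c) gs)) (prod_list gs)"
  proof -
    have em: "map (gstar m c) gs = map (\<lambda>g. Hop m c (bmax m c g) g) gs"
      by (rule map_cong) (simp_all add: gstar_Hop)
    have h1: "Hop m c (sum_list (map (bmax m c) gs)) (prod_list gs) = prod_list (map (\<lambda>g. Hop m c (bmax m c g) g) gs)"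
      using HP by (rule conjunct1)
    have "prod_list zs = prod_list (map (\<lambda>g. Hop m c (bmax m c g) g) gs)"
      unfolding gs(1) em ..
    then show ?thesis using h1 by (rule trans[OF _ sym])
  qed
  have "prod_list gs \<in> ideal_pow (Rring m) I n"
    by (rule ideal_pow_gen) (use gs zs(2) in auto)
  then have "Hop m c (sum_list (map (bmax m c) gs)) (prod_list gs) \<in> Lstar m c (ideal_pow (Rring m) I n)"
    using Hop_in_Lstar[OF InR] HP by blast
  then show "w * prod_list zs \<in> Lstar m c (ideal_pow (Rring m) I n)"
    using ideal_mult[OF Lstar_ideal[OF InR] w] e by simp
qed

lemma LtR: "Ltilde m c I \<subseteq> Sring m"
  using Ltilde_ideal[OF IR] by (simp add: ideal_in_def)

lemma PnI: "ideal_in (Sring m) (ideal_pow (Sring m) (Ltilde m c I) n)"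
  by (rule ideal_pow_ideal[OF subr_S LtR])

lemma P3:
  assumes F: "F \<in> ideal_pow (Rtring m) (Lstar m c I) n"
  shows "emb F \<in> ideal_pow (Sring m) (Ltilde m c I) n"
proof -
  let ?G = "{prod_list xs |xs. length xs = n \<and> set xs \<subseteq> Lstar m c I}"
  have F': "F \<in> ideal_gen (Rtring m) ?G" using F by (simp add: ideal_pow_def)
  have GT: "?G \<subseteq> Rtring m"
  proof
    fix y assume "y \<in> ?G"
    then obtain xs where "y = prod_list xs" "set xs \<subseteq> Lstar m c I" by blast
    then show "y \<in> Rtring m" using subr_prod_list[OF subr_T, of xs] J1T by auto
  qed
  show ?thesis
  proof (rule ideal_gen_induct[OF F' ideal_pre[OF PnI] GT])
    fix y assume "y \<in> ?G"
    then obtain xs where xs: "y = prod_list xs" "length xs = n" "set xs \<subseteq> Lstar m c I" by blast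
    have "prod_list (map emb xs) \<in> ideal_pow (Sring m) (Ltilde m c I) n"
    proof (rule ideal_pow_gen)
      show "length (map emb xs) = n" using xs by simp
      show "set (map emb xs) \<subseteq> Ltilde m c I"
      proof
        fix z assume "z \<in> set (map emb xs)"
        then obtain x where "x \<in> set xs" "z = emb x" by auto
        then have "z \<in> emb ` Lstar m c I" using xs(3) by blast
        then show "z \<in> Ltilde m c I" unfolding Ltilde_def using ideal_gen_sub by blast
      qed
    qed
    then show "emb y \<in> ideal_pow (Sring m) (Ltilde m c I) n" using xs(1) by (simp add: emb_prod_list)
  qed
qed

lemma Pn_sub:
  "ideal_pow (Sring m) (Ltilde m c I) n \<subseteq> Ltilde m c (ideal_pow (Rring m) I n)"
  unfolding ideal_pow_def[of "Sring m"]
proof (rule ideal_gen_min[OF Ltilde_ideal[OF InR]])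
  have eS: "emb ` Lstar m c I \<subseteq> Sring m"
  proof
    fix x assume "x \<in> emb ` Lstar m c I"
    then obtain F where "F \<in> Lstar m c I" "x = emb F" by blast
    then show "x \<in> Sring m" using J1T emb_in_S by blast
  qed
  show "{prod_list xs |xs. length xs = n \<and> set xs \<subseteq> Ltilde m c I} \<subseteq> Ltilde m c (ideal_pow (Rring m) I n)"
  proof
    fix y assume "y \<in> {prod_list xs |xs. length xs = n \<and> set xs \<subseteq> Ltilde m c I}"
    then obtain xs where xs: "y = prod_list xs" "length xs = n" "set xs \<subseteq> Ltilde m c I" by blast
    have "prod_list xs \<in> Ltilde m c (ideal_pow (Rring m) I n)"
    proof (rule ideal_gen_prod[OF subr_S eS Ltilde_ideal[OF InR]])
      show "set xs \<subseteq> ideal_gen (Sring m) (emb ` Lstar m c I)" using xs(3) by (simp add: Ltilde_def)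
      show "length xs = n" by (rule xs(2))
    next
      fix w :: "'k mpoly fract" and zs assume w: "w \<in> Sring m" and zs: "set zs \<subseteq> emb ` Lstar m c I" "length zs = n"
      obtain ys where ys: "zs = map emb ys" "set ys \<subseteq> Lstar m c I" using list_in_image[OF zs(1)] by blast
      have "prod_list ys \<in> Lstar m c (ideal_pow (Rring m) I n)" by (rule P2) (use ys zs in auto)
      then have "emb (prod_list ys) \<in> Ltilde m c (ideal_pow (Rring m) I n)"
        unfolding Ltilde_def using ideal_gen_sub by blast
      then show "w * prod_list zs \<in> Ltilde m c (ideal_pow (Rring m) I n)"
        using ideal_mult[OF Ltilde_ideal[OF InR] w] ys(1) by (simp add: emb_prod_list)
    qed
    then show "y \<in> Ltilde m c (ideal_pow (Rring m) I n)" using xs(1) by simp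
  qed
qed

theorem main:
  "Ltilde m c (ideal_pow (Rring m) I n)
     = saturation (Sring m) (ideal_pow (Sring m) (Ltilde m c I) n) (emb (tvar m))"
proof
  let ?P = "ideal_pow (Sring m) (Ltilde m c I) n"
  let ?RHS = "saturation (Sring m) ?P (emb (tvar m))"
  have satI: "ideal_in (Sring m) ?RHS"
    by (rule saturation_ideal[OF subr_S PnI emb_in_S[OF tvar_in_T]])
  show "Ltilde m c (ideal_pow (Rring m) I n) \<subseteq> ?RHS"
    unfolding Ltilde_def[of m c "ideal_pow (Rring m) I n"]
  proof (rule ideal_gen_min[OF satI])
    show "emb ` Lstar m c (ideal_pow (Rring m) I n) \<subseteq> ?RHS"
    proof
      fix x assume "x \<in> emb ` Lstar m c (ideal_pow (Rring m) I n)"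
      then obtain F where F: "F \<in> Lstar m c (ideal_pow (Rring m) I n)" "x = emb F" by blast
      have F': "F \<in> ideal_gen (Rtring m) (gstar m c ` (ideal_pow (Rring m) I n - {0}))"
        using F(1) by (simp add: Lstar_def)
      have "emb F \<in> ?RHS"
      proof (rule ideal_gen_induct[OF F' ideal_pre[OF satI] gens_sub_T[OF InR]])
        fix G assume "G \<in> gstar m c ` (ideal_pow (Rring m) I n - {0})"
        then obtain g where g: "g \<in> ideal_pow (Rring m) I n" "g \<noteq> 0" "G = gstar m c g" by blast
        obtain r where r: "tvar m ^ r * G \<in> ideal_pow (Rtring m) (Lstar m c I) n" using P1[OF g(1)] g by blast
        have "emb (tvar m ^ r * G) \<in> ?P" by (rule P3[OF r])
        then have "emb (tvar m) ^ r * emb G \<in> ?P" by (simp add: emb_mult emb_pow)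
        moreover have "emb G \<in> Sring m" using emb_in_S gstar_in_T g InR by blast
        ultimately show "emb G \<in> ?RHS" unfolding saturation_def colon_def by blast
      qed
      then show "x \<in> ?RHS" using F by simp
    qed
  qed
  show "?RHS \<subseteq> Ltilde m c (ideal_pow (Rring m) I n)"
  proof
    fix x assume "x \<in> ?RHS"
    then obtain r where x: "x \<in> Sring m" "emb (tvar m) ^ r * x \<in> ?P"
      unfolding saturation_def colon_def by blast
    then have "emb (tvar m) ^ r * x \<in> Ltilde m c (ideal_pow (Rring m) I n)" using Pn_sub by blast
    then show "x \<in> Ltilde m c (ideal_pow (Rring m) I n)" by (rule Ltilde_sat[OF InI x(1)])
  qed
qed

end

theorem lemma3p7:
  fixes m :: nat and c :: "nat \<Rightarrow> int" and I :: "'k::field mpoly set" and n :: nat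
  assumes "homogeneous_ideal m I"
  shows "Ltilde m c (ideal_pow (Rring m) I n)
           = saturation (Sring m) (ideal_pow (Sring m) (Ltilde m c I) n) (emb (tvar m))"
proof -
  have "ideal_in (Rring m) I" using assms by (simp add: homogeneous_ideal_def)
  then show ?thesis by (rule main)
qed

end
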